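(* Assume that $\{Z_i\}_{i\ge 0}$ is a stationary Markov chain on $(\mathsf{Z},\mathcal{Z})$ with Markov kernel $\mathrm{Q}$ and unique invariant distribution $\pi$, and that $\mathrm{Q}$ is uniformly geometrically ergodic with mixing time $\tau\in\mathbb{N}$, i.e. for every $k\in\mathbb{N}$, $$\sup_{z,z'\in\mathsf{Z}}\tfrac12\|\mathrm{Q}^k(z,\cdot)-\mathrm{Q}^k(z',\cdot)\|_{\mathsf{TV}}\le (1/4)^{\lfloor k/\tau\rfloor}.$$ Assume further that for all $x\in\mathbb{R}^d$, $\mathbb{E}_{\pi}[\nabla F(x,Z)]=\nabla f(x)$, and for all $z\in\mathsf{Z}$ and $x\in\mathbb{R}^d$, $$\|\nabla F(x,z)-\nabla f(x)\|^2\le \sigma^2+\delta^2\|\nabla f(x)\|^2 .$$ Then for any $n\ge 1$ and $x\in\mathbb{R}^d$, $$\mathbb{E}_{\pi}\Big[\Big\|\tfrac1n\sum_{i=1}^n\nabla F(x,Z_i)-\nabla f(x)\Big\|^2\Big]\le \frac{8\tau}{n}\big(\sigma^2+\delta^2\|\nabla f(x)\|^2\big),$$ and moreover, for any initial distribution $\xi$ on $(\mathsf{Z},\mathcal{Z})$, $$\mathbb{E}_{\xi}\Big[\Big\|\tfrac1n\sum_{i=1}^n\nabla F(x,Z_i)-\nabla f(x)\Big\|^2\Big]\le \frac{C_1\tau}{n}\big(\sigma^2+\delta^2\|\nabla f(x)\|^2\big),\qquad C_1=16\Big(1+\frac{1}{\ln^2 4}\Big).$$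
   Context: $(\mathsf{Z},\mathcal{Z})$ is a complete separable metric space with its Borel $\sigma$-field. $\mathbb{P}_\xi,\mathbb{E}_\xi$ denote the law and expectation of the Markov chain $(Z_i)$ with kernel $\mathrm{Q}$ started from the initial distribution $\xi$; $\mathbb{E}_\pi$ is the stationary case. $\|\cdot\|_{\mathsf{TV}}$ is the total variation norm of a signed measure. $f:\mathbb{R}^d\to\mathbb{R}$ is defined by $f(x)=\mathbb{E}_{Z\sim\pi}[F(x,Z)]$, where $F(\cdot,z)$ is differentiable for each $z$, and $\sigma\ge0,\delta\ge0$ are constants. *)

theory Defs
  imports "HOL-Analysis.Analysis" "HOL-Probability.Probability"
begin

text \<open>Total variation norm of the signed measure mu - nu (for finite measures on the
  same sigma-algebra): the supremum over measurable |g| <= 1 of |mu g - nu g|,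
  which equals 2 * sup_A |mu A - nu A|.\<close>
definition tv_norm :: "'a measure \<Rightarrow> 'a measure \<Rightarrow> real" where
  "tv_norm \<mu> \<nu> = 2 * (SUP A \<in> sets \<mu>. \<bar>measure \<mu> A - measure \<nu> A\<bar>)"

primrec kernel_pow :: "'z measure \<Rightarrow> ('z \<Rightarrow> 'z measure) \<Rightarrow> nat \<Rightarrow> 'z \<Rightarrow> 'z measure" where
  "kernel_pow M Q 0 = (\<lambda>z. return M z)"
| "kernel_pow M Q (Suc k) = (\<lambda>z. bind (kernel_pow M Q k z) Q)"

text \<open>Law of (Z_0, ..., Z_n) of the Markov chain with kernel Q started from xi,
  as a measure on functions {..n} -> Z.\<close>
primrec chain_law :: "'z measure \<Rightarrow> ('z \<Rightarrow> 'z measure) \<Rightarrow> 'z measure \<Rightarrow> nat \<Rightarrow> (nat \<Rightarrow> 'z) measure" where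
  "chain_law M Q \<xi> 0 = distr \<xi> (PiM {..0} (\<lambda>_. M)) (\<lambda>z. \<lambda>i\<in>{..0::nat}. z)"
| "chain_law M Q \<xi> (Suc n) =
     bind (chain_law M Q \<xi> n)
       (\<lambda>w. distr (Q (w n)) (PiM {..Suc n} (\<lambda>_. M)) (\<lambda>z. w(Suc n := z)))"

end

theory Submission
  imports Defs
begin


lemma abs_integral_le_const:
  fixes f :: "'a \<Rightarrow> real"
  assumes "prob_space M" and b: "\<And>x. x \<in> space M \<Longrightarrow> \<bar>f x\<bar> \<le> C"
  shows "\<bar>integral\<^sup>L M f\<bar> \<le> C"
proof -
  interpret prob_space M by fact
  obtain x where x: "x \<in> space M" using not_empty by blast
  have C0: "0 \<le> C" using b[OF x] by linarith
  show ?thesis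
  proof (cases "integrable M f")
    case True
    have "\<bar>integral\<^sup>L M f\<bar> \<le> (\<integral>x. \<bar>f x\<bar> \<partial>M)" by (rule integral_abs_bound)
    also have "\<dots> \<le> (\<integral>x. C \<partial>M)"
      using True b by (intro integral_mono) auto
    also have "\<dots> = C" by (simp add: prob_space)
    finally show ?thesis .
  next
    case False
    then show ?thesis using C0 by (simp add: not_integrable_integral_eq)
  qed
qed

lemma integral_measurable_kernel2:
  fixes f :: "'a \<Rightarrow> 'b \<Rightarrow> real"
  assumes f: "(\<lambda>(x, y). f x y) \<in> borel_measurable (M \<Otimes>\<^sub>M N)"
  assumes L: "L \<in> measurable M (subprob_algebra N)"
  shows "(\<lambda>x. integral\<^sup>L (L x) (f x)) \<in> borel_measurable M"
proof -
  have d: "(\<lambda>x. distr (L x) (M \<Otimes>\<^sub>M N) (\<lambda>y. (x, y))) \<in> M \<rightarrow>\<^sub>M subprob_algebra (M \<Otimes>\<^sub>M N)"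
  proof (rule measurable_distr2[OF _ L])
    show "(\<lambda>(x, y). (x, y)) \<in> M \<Otimes>\<^sub>M N \<rightarrow>\<^sub>M M \<Otimes>\<^sub>M N"
      by (simp add: case_prod_Pair measurable_ident_sets)
  qed
  have "(\<lambda>x. integral\<^sup>L (distr (L x) (M \<Otimes>\<^sub>M N) (\<lambda>y. (x, y))) (\<lambda>(x, y). f x y)) \<in> borel_measurable M"
    by (rule measurable_compose[OF d integral_measurable_subprob_algebra[OF f]])
  then show ?thesis
  proof (rule measurable_cong[THEN iffD1, rotated])
    fix x assume x: "x \<in> space M"
    have "Pair x \<in> N \<rightarrow>\<^sub>M M \<Otimes>\<^sub>M N"
      using x by (rule measurable_Pair1')
    then have "(\<lambda>y. (x, y)) \<in> L x \<rightarrow>\<^sub>M M \<Otimes>\<^sub>M N"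
      using sets_kernel[OF L x] by (simp cong: measurable_cong_sets)
    then show "integral\<^sup>L (distr (L x) (M \<Otimes>\<^sub>M N) (\<lambda>y. (x, y))) (\<lambda>(x, y). f x y) = integral\<^sup>L (L x) (f x)"
      using f by (subst integral_distr) auto
  qed
qed

lemma count_floor:
  fixes y :: real and N :: nat
  assumes "0 \<le> y" "y \<le> 1" "N \<ge> 1"
  shows "y - 1 / real N \<le> (\<Sum>k\<in>{1..N}. if real k / real N \<le> y then 1 else 0) / real N"
    and "(\<Sum>k\<in>{1..N}. if real k / real N \<le> y then 1 else 0) / real N \<le> y"
proof -
  define m where "m = nat \<lfloor>real N * y\<rfloor>"
  have Npos: "real N > 0" using assms(3) by simp
  have fl0: "\<lfloor>real N * y\<rfloor> \<ge> 0" using assms by simp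
  have m1: "real m \<le> real N * y" unfolding m_def using fl0 by (simp add: of_nat_nat)
  have m2: "real N * y < real m + 1" unfolding m_def using fl0 by (simp add: of_nat_nat)
  have mN: "m \<le> N"
  proof -
    have "real m \<le> real N" using m1 assms(2) Npos
      by (meson dual_order.trans mult_left_le order_less_imp_le)
    then show ?thesis by simp
  qed
  have iff: "real k / real N \<le> y \<longleftrightarrow> k \<in> {1..m}" if "k \<in> {1..N}" for k
  proof -
    have "real k / real N \<le> y \<longleftrightarrow> real k \<le> real N * y" using Npos by (simp add: divide_le_eq mult.commute)
    also have "\<dots> \<longleftrightarrow> int k \<le> \<lfloor>real N * y\<rfloor>" by (simp add: le_floor_iff)
    also have "\<dots> \<longleftrightarrow> k \<le> m" unfolding m_def using fl0 by linarith
    finally show ?thesis using that by auto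
  qed
  have "(\<Sum>k\<in>{1..N}. if real k / real N \<le> y then 1 else 0) = (\<Sum>k\<in>{1..N}. if k \<in> {1..m} then (1::real) else 0)"
    using iff by (intro sum.cong) auto
  also have "\<dots> = (\<Sum>k\<in>{1..N} \<inter> {1..m}. (1::real))"
    by (rule sum.inter_restrict[symmetric]) simp
  also have "{1..N} \<inter> {1..m} = {1..m}" using mN by auto
  finally have S: "(\<Sum>k\<in>{1..N}. if real k / real N \<le> y then 1 else 0) = real m" by simp
  have "(real N * y - 1) / real N \<le> real m / real N" using m2 Npos by (intro divide_right_mono) auto
  moreover have "(real N * y - 1) / real N = y - 1 / real N" using Npos by (simp add: field_simps)
  ultimately show "y - 1 / real N \<le> (\<Sum>k\<in>{1..N}. if real k / real N \<le> y then 1 else 0) / real N"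
    unfolding S by simp
  have "real m / real N \<le> (real N * y) / real N" using m1 Npos by (intro divide_right_mono) auto
  moreover have "(real N * y) / real N = y" using Npos by simp
  ultimately show "(\<Sum>k\<in>{1..N}. if real k / real N \<le> y then 1 else 0) / real N \<le> y"
    unfolding S by simp
qed

lemma tv_01:
  fixes u :: "'a \<Rightarrow> real"
  assumes mu: "prob_space \<mu>" and nu: "prob_space \<nu>" and sets_eq: "sets \<nu> = sets \<mu>"
    and um: "u \<in> borel_measurable \<mu>" and ub: "\<And>x. x \<in> space \<mu> \<Longrightarrow> 0 \<le> u x \<and> u x \<le> 1"
  shows "\<bar>(\<integral>x. u x \<partial>\<mu>) - (\<integral>x. u x \<partial>\<nu>)\<bar> \<le> (SUP A\<in>sets \<mu>. \<bar>measure \<mu> A - measure \<nu> A\<bar>)"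
    (is "_ \<le> ?s")
proof -
  interpret M: prob_space \<mu> by fact
  interpret V: prob_space \<nu> by fact
  have sp: "space \<nu> = space \<mu>" using sets_eq by (rule sets_eq_imp_space_eq)
  have um': "u \<in> borel_measurable \<nu>" using um sets_eq by (simp cong: measurable_cong_sets)
  have bdd: "bdd_above ((\<lambda>A. \<bar>measure \<mu> A - measure \<nu> A\<bar>) ` sets \<mu>)"
  proof (rule bdd_aboveI2)
    fix A assume "A \<in> sets \<mu>"
    show "\<bar>measure \<mu> A - measure \<nu> A\<bar> \<le> 1"
      using M.prob_le_1[of A] V.prob_le_1[of A] measure_nonneg[of \<mu> A] measure_nonneg[of \<nu> A] by (simp only: abs_le_iff) linarith
  qed
  have sA: "\<bar>measure \<mu> A - measure \<nu> A\<bar> \<le> ?s" if "A \<in> sets \<mu>" for A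
    using bdd that by (rule cSUP_upper2) simp
  have intu: "integrable \<mu> u" 
    using ub um by (intro M.integrable_const_bound[where B=1]) (auto intro!: AE_I2)
  have intu': "integrable \<nu> u" 
    using ub um' sp by (intro V.integrable_const_bound[where B=1]) (auto intro!: AE_I2)
  show ?thesis
  proof (rule field_le_epsilon)
    fix e :: real assume e: "0 < e"
    define N where "N = nat \<lceil>2 / e\<rceil> + 1"
    have N1: "N \<ge> 1" unfolding N_def by simp
    have Npos: "real N > 0" using N1 by simp
    have "real N > 2 / e" unfolding N_def by linarith
    then have Ne: "2 / real N < e" using e Npos by (simp add: field_simps)
    define A where "A = (\<lambda>k::nat. {x \<in> space \<mu>. real k / real N \<le> u x})"
    have Am: "A k \<in> sets \<mu>" for k unfolding A_def using um by measurable
    have Am': "A k \<in> sets \<nu>" for k using Am sets_eq by simp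
    define v where "v = (\<lambda>x. (\<Sum>k\<in>{1..N}. indicator (A k) x) / real N :: real)"
    have vx: "v x = (\<Sum>k\<in>{1..N}. if real k / real N \<le> u x then 1 else 0) / real N" if "x \<in> space \<mu>" for x
    proof -
      have "(\<Sum>k\<in>{1..N}. indicator (A k) x) = (\<Sum>k\<in>{1..N}. if real k / real N \<le> u x then 1 else (0::real))"
        using that by (intro sum.cong) (auto simp: A_def indicator_def)
      then show ?thesis unfolding v_def by (rule arg_cong[where f="\<lambda>s. s / real N"])
    qed
    have v1: "\<bar>u x - v x\<bar> \<le> 1 / real N" if "x \<in> space \<mu>" for x
      using count_floor[of "u x" N] ub[OF that] N1 vx[OF that] by (simp add: abs_le_iff)
    have intv: "integrable \<mu> v" unfolding v_def by (intro integrable_divide Bochner_Integration.integrable_sum integrable_real_indicator) (use Am in \<open>auto simp: M.emeasure_finite less_top[symmetric]\<close>)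
    have intv': "integrable \<nu> v" unfolding v_def by (intro integrable_divide Bochner_Integration.integrable_sum integrable_real_indicator) (use Am' in \<open>auto simp: V.emeasure_finite less_top[symmetric]\<close>)
    have Iv: "(\<integral>x. v x \<partial>\<mu>) = (\<Sum>k\<in>{1..N}. measure \<mu> (A k)) / real N"
    proof -
      have "(\<integral>x. (\<Sum>k\<in>{1..N}. indicator (A k) x) \<partial>\<mu>) = (\<Sum>k\<in>{1..N}. measure \<mu> (A k))"
        by (subst Bochner_Integration.integral_sum) (auto intro!: integrable_real_indicator simp: Am M.emeasure_finite less_top[symmetric])
      then show ?thesis unfolding v_def by (simp add: integral_divide_zero)
    qed
    have Iv': "(\<integral>x. v x \<partial>\<nu>) = (\<Sum>k\<in>{1..N}. measure \<nu> (A k)) / real N"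
    proof -
      have "(\<integral>x. (\<Sum>k\<in>{1..N}. indicator (A k) x) \<partial>\<nu>) = (\<Sum>k\<in>{1..N}. measure \<nu> (A k))"
        by (subst Bochner_Integration.integral_sum) (auto intro!: integrable_real_indicator simp: Am' V.emeasure_finite less_top[symmetric])
      then show ?thesis unfolding v_def by (simp add: integral_divide_zero)
    qed
    have d1: "\<bar>(\<integral>x. u x \<partial>\<mu>) - (\<integral>x. v x \<partial>\<mu>)\<bar> \<le> 1 / real N"
    proof -
      have "\<bar>\<integral>x. u x - v x \<partial>\<mu>\<bar> \<le> 1 / real N" using v1 by (intro abs_integral_le_const[OF mu]) auto
      then show ?thesis using intu intv by simp
    qed
    have d2: "\<bar>(\<integral>x. u x \<partial>\<nu>) - (\<integral>x. v x \<partial>\<nu>)\<bar> \<le> 1 / real N"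
    proof -
      have "\<bar>\<integral>x. u x - v x \<partial>\<nu>\<bar> \<le> 1 / real N" using v1 sp by (intro abs_integral_le_const[OF nu]) auto
      then show ?thesis using intu' intv' by simp
    qed
    have d3: "\<bar>(\<integral>x. v x \<partial>\<mu>) - (\<integral>x. v x \<partial>\<nu>)\<bar> \<le> ?s"
    proof -
      have "\<bar>(\<integral>x. v x \<partial>\<mu>) - (\<integral>x. v x \<partial>\<nu>)\<bar> = \<bar>\<Sum>k\<in>{1..N}. measure \<mu> (A k) - measure \<nu> (A k)\<bar> / real N"
        unfolding Iv Iv' using Npos by (simp add: sum_subtractf diff_divide_distrib[symmetric])
      also have "\<dots> \<le> (\<Sum>k\<in>{1..N}. \<bar>measure \<mu> (A k) - measure \<nu> (A k)\<bar>) / real N"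
        using Npos by (intro divide_right_mono sum_abs) auto
      also have "\<dots> \<le> (\<Sum>k\<in>{1..N}. ?s) / real N"
        using Npos sA[OF Am] by (intro divide_right_mono sum_mono) auto
      also have "\<dots> = ?s" using Npos by simp
      finally show ?thesis .
    qed
    have "\<bar>(\<integral>x. u x \<partial>\<mu>) - (\<integral>x. u x \<partial>\<nu>)\<bar> \<le> ?s + 2 / real N"
      using d1 d2 d3 by (simp add: abs_le_iff)
    then show "\<bar>(\<integral>x. u x \<partial>\<mu>) - (\<integral>x. u x \<partial>\<nu>)\<bar> \<le> ?s + e" using Ne by linarith
  qed
qed

lemma tv_bound:
  fixes h :: "'a \<Rightarrow> real"
  assumes mu: "prob_space \<mu>" and nu: "prob_space \<nu>" and sets_eq: "sets \<nu> = sets \<mu>"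
    and hm: "h \<in> borel_measurable \<mu>" and hb: "\<And>x. x \<in> space \<mu> \<Longrightarrow> \<bar>h x\<bar> \<le> c"
  shows "\<bar>(\<integral>x. h x \<partial>\<mu>) - (\<integral>x. h x \<partial>\<nu>)\<bar> \<le> c * tv_norm \<mu> \<nu>"
proof -
  interpret M: prob_space \<mu> by fact
  interpret V: prob_space \<nu> by fact
  have sp: "space \<nu> = space \<mu>" using sets_eq by (rule sets_eq_imp_space_eq)
  obtain x0 where x0: "x0 \<in> space \<mu>" using M.not_empty by blast
  have c0: "c \<ge> 0" using hb[OF x0] by linarith
  show ?thesis
  proof (cases "c = 0")
    case True
    then have "\<And>x. x \<in> space \<mu> \<Longrightarrow> h x = 0" using hb by fastforce
    then have "(\<integral>x. h x \<partial>\<mu>) = 0" "(\<integral>x. h x \<partial>\<nu>) = 0"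
      using sp by (auto intro: integral_eq_zero_AE AE_I2)
    then show ?thesis using True by simp
  next
    case False
    then have cpos: "c > 0" using c0 by simp
    define u where "u = (\<lambda>x. (h x + c) / (2 * c))"
    have um: "u \<in> borel_measurable \<mu>" unfolding u_def using hm by measurable
    have ub: "0 \<le> u x \<and> u x \<le> 1" if "x \<in> space \<mu>" for x
      using hb[OF that] cpos unfolding u_def by (auto simp: abs_le_iff field_simps)
    have hu: "h x = 2 * c * u x - c" for x unfolding u_def using cpos by (simp add: field_simps)
    have um': "u \<in> borel_measurable \<nu>" using um sets_eq by (simp cong: measurable_cong_sets)
    have intu: "integrable \<mu> u" 
      using ub um by (intro M.integrable_const_bound[where B=1]) (auto intro!: AE_I2)
    have intu': "integrable \<nu> u" 
      using ub um' sp by (intro V.integrable_const_bound[where B=1]) (auto intro!: AE_I2)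
    have I1: "(\<integral>x. h x \<partial>\<mu>) = 2 * c * (\<integral>x. u x \<partial>\<mu>) - c"
      unfolding hu using intu by (simp add: M.prob_space)
    have I2: "(\<integral>x. h x \<partial>\<nu>) = 2 * c * (\<integral>x. u x \<partial>\<nu>) - c"
      unfolding hu using intu' by (simp add: V.prob_space)
    have "\<bar>(\<integral>x. h x \<partial>\<mu>) - (\<integral>x. h x \<partial>\<nu>)\<bar> = 2 * c * \<bar>(\<integral>x. u x \<partial>\<mu>) - (\<integral>x. u x \<partial>\<nu>)\<bar>"
      unfolding I1 I2 using cpos by (simp add: abs_mult right_diff_distrib[symmetric])
    also have "\<dots> \<le> 2 * c * (SUP A\<in>sets \<mu>. \<bar>measure \<mu> A - measure \<nu> A\<bar>)"
      using tv_01[OF mu nu sets_eq um ub] cpos by simp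
    also have "\<dots> = c * tv_norm \<mu> \<nu>" unfolding tv_norm_def by simp
    finally show ?thesis .
  qed
qed

lemma geo_div_sum:
  fixes \<tau> N :: nat
  assumes tau: "\<tau> \<ge> 1"
  shows "(\<Sum>k<N. (1/4::real) ^ (k div \<tau>)) \<le> 4 / 3 * real \<tau>"
proof -
  have "(\<Sum>k<N. (1/4::real) ^ (k div \<tau>)) \<le> (\<Sum>k<N * \<tau>. (1/4::real) ^ (k div \<tau>))"
    using tau by (intro sum_mono2) auto
  also have "\<dots> = (\<Sum>q<N. (\<Sum>k\<in>{q * \<tau>..<q * \<tau> + \<tau>}. (1/4::real) ^ (k div \<tau>)))"
    by (rule sum.nat_group[symmetric])
  also have "\<dots> = (\<Sum>q<N. real \<tau> * (1/4) ^ q)"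
  proof (rule sum.cong[OF refl])
    fix q
    have "(\<Sum>k\<in>{q * \<tau>..<q * \<tau> + \<tau>}. (1/4::real) ^ (k div \<tau>)) = (\<Sum>k\<in>{q * \<tau>..<q * \<tau> + \<tau>}. (1/4::real) ^ q)"
    proof (rule sum.cong[OF refl])
      fix k assume k: "k \<in> {q * \<tau>..<q * \<tau> + \<tau>}"
      then obtain i where i: "k = q * \<tau> + i" "i < \<tau>" by (metis add_less_cancel_left atLeastLessThan_iff le_add_diff_inverse)
      have "k div \<tau> = q" using i tau by simp
      then show "(1/4::real) ^ (k div \<tau>) = (1/4) ^ q" by simp
    qed
    then show "(\<Sum>k\<in>{q * \<tau>..<q * \<tau> + \<tau>}. (1/4::real) ^ (k div \<tau>)) = real \<tau> * (1/4) ^ q" by simp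
  qed
  also have "\<dots> = real \<tau> * (\<Sum>q<N. (1/4::real) ^ q)" by (simp add: sum_distrib_left)
  also have "\<dots> \<le> real \<tau> * (4/3)"
  proof -
    have "(\<Sum>q<N. (1/4::real) ^ q) = (1 - (1/4) ^ N) / (1 - 1/4)" by (simp add: sum_gp_strict)
    also have "\<dots> \<le> 4/3" by simp
    finally show ?thesis by (intro mult_left_mono) auto
  qed
  finally show ?thesis by simp
qed

definition dd :: "nat \<Rightarrow> nat \<Rightarrow> nat" where "dd i j = (if i \<le> j then j - i else i - j)"

lemma row_sum:
  fixes \<tau> n i :: nat
  assumes tau: "\<tau> \<ge> 1" and i: "i \<in> {1..n}"
  shows "(\<Sum>j\<in>{1..n}. (1/4::real) ^ (dd i j div \<tau>)) \<le> 4 * real \<tau>"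
proof -
  let ?f = "\<lambda>k. (1/4::real) ^ (k div \<tau>)"
  define S1 where "S1 = {j\<in>{1..n}. i \<le> j}"
  define S2 where "S2 = {j\<in>{1..n}. \<not> i \<le> j}"
  have split: "(\<Sum>j\<in>{1..n}. ?f (dd i j)) = (\<Sum>j\<in>S1. ?f (dd i j)) + (\<Sum>j\<in>S2. ?f (dd i j))"
  proof -
    have U: "{1..n} = S1 \<union> S2" unfolding S1_def S2_def by auto
    show ?thesis unfolding U by (rule sum.union_disjoint) (auto simp: S1_def S2_def)
  qed
  have "(\<Sum>j\<in>S1. ?f (dd i j)) = (\<Sum>j\<in>S1. ?f (j - i))"
    unfolding S1_def dd_def by (intro sum.cong) auto
  also have "\<dots> = (\<Sum>k\<in>(\<lambda>j. j - i) ` S1. ?f k)"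
    by (rule sum.reindex[symmetric, unfolded comp_def]) (auto simp: S1_def inj_on_def)
  also have "\<dots> \<le> (\<Sum>k<n. ?f k)"
    using i by (intro sum_mono2) (auto simp: S1_def)
  finally have A: "(\<Sum>j\<in>S1. ?f (dd i j)) \<le> (\<Sum>k<n. ?f k)" .
  have "(\<Sum>j\<in>S2. ?f (dd i j)) = (\<Sum>j\<in>S2. ?f (i - j))"
    unfolding S2_def dd_def by (intro sum.cong) auto
  also have "\<dots> = (\<Sum>k\<in>(\<lambda>j. i - j) ` S2. ?f k)"
    by (rule sum.reindex[symmetric, unfolded comp_def]) (auto simp: S2_def inj_on_def)
  also have "\<dots> \<le> (\<Sum>k<n. ?f k)"
    using i by (intro sum_mono2) (auto simp: S2_def)
  finally have B: "(\<Sum>j\<in>S2. ?f (dd i j)) \<le> (\<Sum>k<n. ?f k)" .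
  have C: "(\<Sum>k<n. ?f k) \<le> 4 / 3 * real \<tau>" by (rule geo_div_sum[OF tau])
  show ?thesis using split A B C tau by simp
qed

locale mchain =
  fixes Q :: "'z::polish_space \<Rightarrow> 'z measure"
  assumes kernel: "Q \<in> borel \<rightarrow>\<^sub>M prob_algebra borel"
begin

lemma kernel_pow_meas: "kernel_pow borel Q k \<in> borel \<rightarrow>\<^sub>M prob_algebra borel"
proof (induction k)
  case 0
  then show ?case by (simp add: measurable_return_prob_space)
next
  case (Suc k)
  then show ?case using kernel by (simp add: measurable_bind_prob_space)
qed

lemma step_kernel_meas:
  "(\<lambda>w. distr (Q (w n)) (PiM {..Suc n} (\<lambda>_. borel)) (\<lambda>z. w(Suc n := z)))
     \<in> PiM {..n} (\<lambda>_. borel) \<rightarrow>\<^sub>M prob_algebra (PiM {..Suc n} (\<lambda>_. borel))"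
proof (rule measurable_distr_prob_space2)
  show "(\<lambda>w. Q (w n)) \<in> PiM {..n} (\<lambda>_. borel) \<rightarrow>\<^sub>M prob_algebra borel"
  proof -
    have "(\<lambda>x. x n) \<in> PiM {..n} (\<lambda>_. borel) \<rightarrow>\<^sub>M (borel::'z measure)"
      by (rule measurable_component_singleton) simp
    then show ?thesis using kernel by (rule measurable_compose)
  qed
  show "(\<lambda>(w, z). w(Suc n := z)) \<in> PiM {..n} (\<lambda>_. borel) \<Otimes>\<^sub>M borel \<rightarrow>\<^sub>M PiM {..Suc n} (\<lambda>_. borel)"
  proof -
    have "(\<lambda>x. (fst x)(Suc n := snd x)) \<in> PiM {..n} (\<lambda>_. borel) \<Otimes>\<^sub>M borel \<rightarrow>\<^sub>M PiM {..Suc n} (\<lambda>_. borel)"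
      by (rule measurable_fun_upd[where J="{..n}"]) auto
    then show ?thesis by (simp add: split_beta')
  qed
qed

lemma chain_law_space:
  assumes xi: "prob_space \<xi>" "sets \<xi> = sets borel"
  shows "chain_law borel Q \<xi> n \<in> space (prob_algebra (PiM {..n} (\<lambda>_. borel)))"
proof (induction n)
  case 0
  have m: "(\<lambda>z. \<lambda>i\<in>{..0::nat}. z) \<in> \<xi> \<rightarrow>\<^sub>M PiM {..0} (\<lambda>_. borel)"
    by (rule measurable_restrict) (simp add: xi measurable_ident_sets)
  show ?case using xi m by (auto simp: space_prob_algebra intro: prob_space.prob_space_distr)
next
  case (Suc n)
  show ?case using Suc step_kernel_meas[of n] by (auto simp: space_prob_algebra prob_space_bind' sets_bind')
qed

lemma chain_prob:
  assumes xi: "prob_space \<xi>" "sets \<xi> = sets borel"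
  shows "prob_space (chain_law borel Q \<xi> n)" and "sets (chain_law borel Q \<xi> n) = sets (PiM {..n} (\<lambda>_. borel))"
    and "space (chain_law borel Q \<xi> n) = space (PiM {..n} (\<lambda>_. borel))"
proof -
  show 1: "prob_space (chain_law borel Q \<xi> n)" and 2: "sets (chain_law borel Q \<xi> n) = sets (PiM {..n} (\<lambda>_. borel))"
    using chain_law_space[OF xi, of n] by (auto simp: space_prob_algebra)
  show "space (chain_law borel Q \<xi> n) = space (PiM {..n} (\<lambda>_. borel))"
    using 2 by (rule sets_eq_imp_space_eq)
qed

lemma chain_step_integral:
  fixes f :: "(nat \<Rightarrow> 'z) \<Rightarrow> real"
  assumes xi: "prob_space \<xi>" "sets \<xi> = sets borel"
    and f: "f \<in> borel_measurable (PiM {..Suc n} (\<lambda>_. borel))"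
    and b: "\<And>w. w \<in> space (PiM {..Suc n} (\<lambda>_. borel)) \<Longrightarrow> \<bar>f w\<bar> \<le> c"
  shows "(\<integral>w. f w \<partial>chain_law borel Q \<xi> (Suc n))
       = (\<integral>w. (\<integral>z. f (w(Suc n := z)) \<partial>Q (w n)) \<partial>chain_law borel Q \<xi> n)"
proof -
  let ?K = "\<lambda>w. distr (Q (w n)) (PiM {..Suc n} (\<lambda>_. borel)) (\<lambda>z. w(Suc n := z))"
  have K: "?K \<in> chain_law borel Q \<xi> n \<rightarrow>\<^sub>M subprob_algebra (PiM {..Suc n} (\<lambda>_. borel))"
    using measurable_prob_algebraD[OF step_kernel_meas[of n]] chain_prob(2)[OF xi, of n]
    by (simp cong: measurable_cong_sets)
  interpret P: prob_space "chain_law borel Q \<xi> n" using chain_prob[OF xi] by simp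
  have "(\<integral>w. f w \<partial>chain_law borel Q \<xi> (Suc n)) = (\<integral>w. integral\<^sup>L (?K w) f \<partial>chain_law borel Q \<xi> n)"
    unfolding chain_law.simps
  proof (rule integral_bind[where B=c and B'=1 and K="PiM {..Suc n} (\<lambda>_. borel)"])
    show "f \<in> borel_measurable (PiM {..Suc n} (\<lambda>_. borel))" by (rule f)
    show "\<And>x. x \<in> space (PiM {..Suc n} (\<lambda>_. borel)) \<Longrightarrow> \<bar>f x\<bar> \<le> c" by (rule b)
    show "?K \<in> chain_law borel Q \<xi> n \<rightarrow>\<^sub>M subprob_algebra (PiM {..Suc n} (\<lambda>_. borel))" by (rule K)
    show "finite_measure (chain_law borel Q \<xi> n)" by (rule P.finite_measure_axioms)
    show "AE x in chain_law borel Q \<xi> n. emeasure (?K x) (space (?K x)) \<le> ennreal 1"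
    proof (rule AE_I2)
      fix x assume "x \<in> space (chain_law borel Q \<xi> n)"
      then have "subprob_space (?K x)" by (rule subprob_space_kernel[OF K])
      then show "emeasure (?K x) (space (?K x)) \<le> ennreal 1"
        by (metis subprob_space.emeasure_space_le_1 ennreal_1)
    qed
  qed
  also have "\<dots> = (\<integral>w. (\<integral>z. f (w(Suc n := z)) \<partial>Q (w n)) \<partial>chain_law borel Q \<xi> n)"
  proof (rule Bochner_Integration.integral_cong[OF refl])
    fix w assume "w \<in> space (chain_law borel Q \<xi> n)"
    then have w: "w \<in> space (PiM {..n} (\<lambda>_. borel))" using chain_prob(3)[OF xi] by simp
    have sQ: "sets (Q (w n)) = sets borel"
      using measurable_space[OF kernel, of "w n"] by (simp add: space_prob_algebra)
    have "(\<lambda>z. w(Suc n := z)) \<in> Q (w n) \<rightarrow>\<^sub>M PiM {..Suc n} (\<lambda>_. borel)"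
    proof -
      have "(\<lambda>z. ((\<lambda>_. w) z)(Suc n := z)) \<in> borel \<rightarrow>\<^sub>M PiM {..Suc n} (\<lambda>_. borel)"
      proof (rule measurable_fun_upd[where J="{..n}"])
        show "{..Suc n} = {..n} \<union> {Suc n}" by auto
        show "(\<lambda>_. w) \<in> borel \<rightarrow>\<^sub>M PiM {..n} (\<lambda>_. borel)" using w by (rule measurable_const)
      qed (rule measurable_ident_sets[OF refl])
      then show ?thesis using sQ by (simp cong: measurable_cong_sets)
    qed
    then show "integral\<^sup>L (?K w) f = (\<integral>z. f (w(Suc n := z)) \<partial>Q (w n))"
      using f by (rule integral_distr)
  qed
  finally show ?thesis .
qed


lemma Q_meas_sub: "Q \<in> borel \<rightarrow>\<^sub>M subprob_algebra borel"
  using kernel by (rule measurable_prob_algebraD)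

lemma integral_bind_kernel:
  fixes h :: "'z \<Rightarrow> real"
  assumes N: "N \<in> borel \<rightarrow>\<^sub>M prob_algebra borel"
    and M: "prob_space M" "sets M = sets borel"
    and h: "h \<in> borel_measurable borel" and b: "\<And>x. \<bar>h x\<bar> \<le> c"
  shows "(\<integral>x. h x \<partial>bind M N) = (\<integral>u. (\<integral>x. h x \<partial>N u) \<partial>M)"
proof -
  have N': "N \<in> M \<rightarrow>\<^sub>M subprob_algebra borel"
    using measurable_prob_algebraD[OF N] M(2) by (simp cong: measurable_cong_sets)
  interpret P: prob_space M by fact
  show ?thesis
  proof (rule integral_bind[where B=c and B'=1 and K=borel])
    show "h \<in> borel_measurable borel" by (rule h)
    show "\<And>x. x \<in> space borel \<Longrightarrow> \<bar>h x\<bar> \<le> c" by (rule b)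
    show "N \<in> M \<rightarrow>\<^sub>M subprob_algebra borel" by (rule N')
    show "finite_measure M" by (rule P.finite_measure_axioms)
    show "AE x in M. emeasure (N x) (space (N x)) \<le> ennreal 1"
    proof (rule AE_I2)
      fix x assume "x \<in> space M"
      then have "subprob_space (N x)" by (rule subprob_space_kernel[OF N'])
      then show "emeasure (N x) (space (N x)) \<le> ennreal 1"
        by (metis subprob_space.emeasure_space_le_1 ennreal_1)
    qed
  qed
qed

lemma kernel_space: "N \<in> borel \<rightarrow>\<^sub>M prob_algebra borel \<Longrightarrow> prob_space (N z) \<and> sets (N z) = sets borel"
  using measurable_space[of N borel "prob_algebra borel" z] by (simp add: space_prob_algebra)

lemma pi_kernel_pow:
  assumes pi: "prob_space \<pi>" "sets \<pi> = sets borel" and inv: "bind \<pi> Q = \<pi>"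
  shows "bind \<pi> (kernel_pow borel Q k) = \<pi>"
proof (induction k)
  case 0
  then show ?case using pi by (simp add: bind_return'')
next
  case (Suc k)
  have M1: "kernel_pow borel Q k \<in> \<pi> \<rightarrow>\<^sub>M subprob_algebra borel"
    using measurable_prob_algebraD[OF kernel_pow_meas[of k]] pi(2) by (simp cong: measurable_cong_sets)
  have "bind \<pi> (kernel_pow borel Q (Suc k)) = bind \<pi> (\<lambda>z. bind (kernel_pow borel Q k z) Q)" by simp
  also have "\<dots> = bind (bind \<pi> (kernel_pow borel Q k)) Q"
    by (rule bind_assoc[OF M1 Q_meas_sub, symmetric])
  also have "\<dots> = \<pi>" using Suc inv by simp
  finally show ?case .
qed

lemma phi_meas:
  fixes \<phi> :: "'z \<Rightarrow> 'z \<Rightarrow> real"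
  assumes f: "(\<lambda>(a, b). \<phi> a b) \<in> borel_measurable (borel \<Otimes>\<^sub>M borel)" and "i \<le> m" "j \<le> m"
  shows "(\<lambda>w. \<phi> (w i) (w j)) \<in> borel_measurable (PiM {..m} (\<lambda>_. borel))"
proof -
  have "(\<lambda>w. (w i, w j)) \<in> PiM {..m} (\<lambda>_. borel) \<rightarrow>\<^sub>M (borel::'z measure) \<Otimes>\<^sub>M (borel::'z measure)"
    using assms(2,3) by (intro measurable_Pair measurable_component_singleton) auto
  from measurable_compose[OF this f] show ?thesis by simp
qed

lemma phi_meas2:
  fixes \<phi> :: "'z \<Rightarrow> 'z \<Rightarrow> real"
  assumes f: "(\<lambda>(a, b). \<phi> a b) \<in> borel_measurable (borel \<Otimes>\<^sub>M borel)"
  shows "(\<lambda>u. \<phi> a u) \<in> borel_measurable borel"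
proof -
  have "Pair a \<in> (borel::'z measure) \<rightarrow>\<^sub>M (borel::'z measure) \<Otimes>\<^sub>M (borel::'z measure)"
    by (rule measurable_Pair1') simp
  from measurable_compose[OF this f] show ?thesis by simp
qed

lemma chain_marginal:
  fixes \<phi> :: "'z \<Rightarrow> 'z \<Rightarrow> real"
  assumes xi: "prob_space \<xi>" "sets \<xi> = sets borel"
    and f: "(\<lambda>(a, b). \<phi> a b) \<in> borel_measurable (borel \<Otimes>\<^sub>M borel)"
    and b: "\<And>a b. \<bar>\<phi> a b\<bar> \<le> c"
    and ij: "i \<le> n" "j \<le> n"
  shows "(\<integral>w. \<phi> (w i) (w j) \<partial>chain_law borel Q \<xi> (n + m)) = (\<integral>w. \<phi> (w i) (w j) \<partial>chain_law borel Q \<xi> n)"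
proof (induction m)
  case 0
  then show ?case by simp
next
  case (Suc m)
  have "(\<integral>w. \<phi> (w i) (w j) \<partial>chain_law borel Q \<xi> (Suc (n + m)))
     = (\<integral>w. (\<integral>z. \<phi> ((w(Suc (n+m) := z)) i) ((w(Suc (n+m) := z)) j) \<partial>Q (w (n+m))) \<partial>chain_law borel Q \<xi> (n+m))"
    by (rule chain_step_integral[OF xi phi_meas[OF f]]) (use ij b in auto)
  also have "\<dots> = (\<integral>w. \<phi> (w i) (w j) \<partial>chain_law borel Q \<xi> (n+m))"
  proof (rule Bochner_Integration.integral_cong[OF refl])
    fix w
    have "prob_space (Q (w (n+m)))" using kernel_space[OF kernel] by blast
    then show "(\<integral>z. \<phi> ((w(Suc (n+m) := z)) i) ((w(Suc (n+m) := z)) j) \<partial>Q (w (n+m))) = \<phi> (w i) (w j)"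
      using ij by (simp add: prob_space.prob_space)
  qed
  finally show ?case using Suc by simp
qed

lemma chain_cond:
  assumes xi: "prob_space \<xi>" "sets \<xi> = sets borel"
  shows "\<And>(\<phi> :: 'z \<Rightarrow> 'z \<Rightarrow> real) c. (\<lambda>(a, b). \<phi> a b) \<in> borel_measurable (borel \<Otimes>\<^sub>M borel) \<Longrightarrow>
     (\<And>a b. \<bar>\<phi> a b\<bar> \<le> c) \<Longrightarrow>
     (\<integral>w. \<phi> (w i) (w (i + k)) \<partial>chain_law borel Q \<xi> (i + k))
       = (\<integral>w. (\<integral>u. \<phi> (w i) u \<partial>kernel_pow borel Q k (w i)) \<partial>chain_law borel Q \<xi> i)"
proof (induction k)
  case 0
  show ?case
  proof (simp, rule Bochner_Integration.integral_cong[OF refl])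
    fix w
    show "\<phi> (w i) (w i) = (\<integral>u. \<phi> (w i) u \<partial>return borel (w i))"
      by (rule integral_return[symmetric]) (auto intro: phi_meas2[OF 0(1)])
  qed
next
  case (Suc k)
  define \<psi> where "\<psi> = (\<lambda>a y. \<integral>z. \<phi> a z \<partial>Q y)"
  have \<psi>m: "(\<lambda>(a, b). \<psi> a b) \<in> borel_measurable (borel \<Otimes>\<^sub>M borel)"
  proof -
    have f2: "(\<lambda>(x::'z \<times> 'z, z). \<phi> (fst x) z) \<in> borel_measurable ((borel \<Otimes>\<^sub>M borel) \<Otimes>\<^sub>M borel)"
    proof -
      have "(\<lambda>p. (fst (fst p), snd p)) \<in> ((borel::'z measure) \<Otimes>\<^sub>M (borel::'z measure)) \<Otimes>\<^sub>M (borel::'z measure) \<rightarrow>\<^sub>M (borel::'z measure) \<Otimes>\<^sub>M (borel::'z measure)"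
        by measurable
      from measurable_compose[OF this Suc(2)] show ?thesis by (simp add: split_beta')
    qed
    have L: "(\<lambda>x. Q (snd x)) \<in> (borel \<Otimes>\<^sub>M borel) \<rightarrow>\<^sub>M subprob_algebra borel"
      by (rule measurable_compose[OF measurable_snd Q_meas_sub])
    from integral_measurable_kernel2[OF f2 L] show ?thesis
      by (simp add: \<psi>_def split_beta')
  qed
  have \<psi>b: "\<And>a b. \<bar>\<psi> a b\<bar> \<le> c"
    unfolding \<psi>_def using kernel_space[OF kernel] Suc(3) by (intro abs_integral_le_const) auto
  have "(\<integral>w. \<phi> (w i) (w (i + Suc k)) \<partial>chain_law borel Q \<xi> (i + Suc k))
      = (\<integral>w. (\<integral>z. \<phi> ((w(Suc (i+k) := z)) i) ((w(Suc (i+k) := z)) (Suc (i+k))) \<partial>Q (w (i+k))) \<partial>chain_law borel Q \<xi> (i+k))"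
    unfolding add_Suc_right by (rule chain_step_integral[OF xi phi_meas[OF Suc(2)]]) (use Suc(3) in auto)
  also have "\<dots> = (\<integral>w. \<psi> (w i) (w (i+k)) \<partial>chain_law borel Q \<xi> (i+k))"
    by (rule Bochner_Integration.integral_cong[OF refl]) (simp add: \<psi>_def)
  also have "\<dots> = (\<integral>w. (\<integral>u. \<psi> (w i) u \<partial>kernel_pow borel Q k (w i)) \<partial>chain_law borel Q \<xi> i)"
    by (rule Suc(1)[OF \<psi>m \<psi>b])
  also have "\<dots> = (\<integral>w. (\<integral>u. \<phi> (w i) u \<partial>kernel_pow borel Q (Suc k) (w i)) \<partial>chain_law borel Q \<xi> i)"
  proof (rule Bochner_Integration.integral_cong[OF refl])
    fix w
    have "(\<integral>u. \<phi> (w i) u \<partial>kernel_pow borel Q (Suc k) (w i)) = (\<integral>u. \<phi> (w i) u \<partial>bind (kernel_pow borel Q k (w i)) Q)"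
      by simp
    also have "\<dots> = (\<integral>u. \<psi> (w i) u \<partial>kernel_pow borel Q k (w i))"
      unfolding \<psi>_def
      by (rule integral_bind_kernel[OF kernel _ _ phi_meas2[OF Suc(2)] Suc(3)])
         (use kernel_space[OF kernel_pow_meas] in auto)
    finally show "(\<integral>u. \<psi> (w i) u \<partial>kernel_pow borel Q k (w i)) = (\<integral>u. \<phi> (w i) u \<partial>kernel_pow borel Q (Suc k) (w i))" ..
  qed
  finally show ?case .
qed


lemma decay:
  fixes h :: "'z \<Rightarrow> real"
  assumes pi: "prob_space \<pi>" "sets \<pi> = sets borel" and inv: "bind \<pi> Q = \<pi>"
    and mix: "\<And>z z'. tv_norm (kernel_pow borel Q k z) (kernel_pow borel Q k z') / 2 \<le> r"
    and h: "h \<in> borel_measurable borel" and hb: "\<And>x. \<bar>h x\<bar> \<le> c" and h0: "(\<integral>x. h x \<partial>\<pi>) = 0"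
  shows "\<bar>\<integral>x. h x \<partial>kernel_pow borel Q k b\<bar> \<le> 2 * c * r"
proof -
  let ?K = "kernel_pow borel Q k"
  let ?g = "\<lambda>z. \<integral>x. h x \<partial>?K z"
  have c0: "c \<ge> 0" using hb[of b] by linarith
  have gm: "?g \<in> borel_measurable \<pi>"
  proof -
    have "?g \<in> borel_measurable borel"
      by (rule measurable_compose[OF measurable_prob_algebraD[OF kernel_pow_meas] integral_measurable_subprob_algebra[OF h]])
    then show ?thesis using pi(2) by (simp cong: measurable_cong_sets)
  qed
  have gb: "\<bar>?g z\<bar> \<le> c" for z using kernel_space[OF kernel_pow_meas] hb by (intro abs_integral_le_const) auto
  interpret P: prob_space \<pi> by (rule pi(1))
  have gi: "integrable \<pi> ?g" using gm gb by (intro P.integrable_const_bound[where B=c]) (auto intro!: AE_I2)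
  have "(\<integral>x. h x \<partial>\<pi>) = (\<integral>z. ?g z \<partial>\<pi>)"
    using integral_bind_kernel[OF kernel_pow_meas[of k] pi h hb] pi_kernel_pow[OF pi inv, of k] by simp
  then have g0: "(\<integral>z. ?g z \<partial>\<pi>) = 0" using h0 by simp
  have "(\<integral>z. (?g b - ?g z) \<partial>\<pi>) = ?g b - (\<integral>z. ?g z \<partial>\<pi>)"
    by (subst Bochner_Integration.integral_diff) (auto simp: gi P.prob_space)
  then have eq: "?g b = (\<integral>z. (?g b - ?g z) \<partial>\<pi>)" using g0 by simp
  have "\<bar>\<integral>z. (?g b - ?g z) \<partial>\<pi>\<bar> \<le> c * (2 * r)"
  proof (rule abs_integral_le_const[OF pi(1)])
    fix z
    have Kb: "prob_space (?K b)" "sets (?K b) = sets borel" using kernel_space[OF kernel_pow_meas] by auto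
    have Kz: "prob_space (?K z)" "sets (?K z) = sets borel" using kernel_space[OF kernel_pow_meas] by auto
    have hK: "h \<in> borel_measurable (?K b)" using h Kb(2) by (simp cong: measurable_cong_sets)
    have "\<bar>?g b - ?g z\<bar> \<le> c * tv_norm (?K b) (?K z)"
      by (rule tv_bound[OF Kb(1) Kz(1) _ hK hb]) (simp add: Kb Kz)
    also have "\<dots> \<le> c * (2 * r)" using mix[of b z] c0 by (intro mult_left_mono) auto
    finally show "\<bar>?g b - ?g z\<bar> \<le> c * (2 * r)" .
  qed
  then show ?thesis using eq by simp
qed

lemma pair_bound:
  fixes \<phi> :: "'z \<Rightarrow> 'z \<Rightarrow> real"
  assumes xi: "prob_space \<xi>" "sets \<xi> = sets borel"
    and pi: "prob_space \<pi>" "sets \<pi> = sets borel" and inv: "bind \<pi> Q = \<pi>"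
    and mix: "\<And>k z z'. tv_norm (kernel_pow borel Q k z) (kernel_pow borel Q k z') / 2 \<le> (1/4) ^ (k div \<tau>)"
    and f: "(\<lambda>(a, b). \<phi> a b) \<in> borel_measurable (borel \<Otimes>\<^sub>M borel)"
    and b: "\<And>a b. \<bar>\<phi> a b\<bar> \<le> c" and zero: "\<And>a. (\<integral>u. \<phi> a u \<partial>\<pi>) = 0"
    and ij: "i \<le> j" "j \<le> n"
  shows "\<bar>\<integral>w. \<phi> (w i) (w j) \<partial>chain_law borel Q \<xi> n\<bar> \<le> 2 * c * (1/4) ^ ((j - i) div \<tau>)"
proof -
  have "(\<integral>w. \<phi> (w i) (w j) \<partial>chain_law borel Q \<xi> n) = (\<integral>w. \<phi> (w i) (w j) \<partial>chain_law borel Q \<xi> j)"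
    using chain_marginal[OF xi f b, where i=i and j=j and n=j and m="n - j"] ij by simp
  also have "\<dots> = (\<integral>w. (\<integral>u. \<phi> (w i) u \<partial>kernel_pow borel Q (j - i) (w i)) \<partial>chain_law borel Q \<xi> i)"
    using chain_cond[OF xi f b, where i=i and k="j - i"] ij by simp
  finally have eq: "(\<integral>w. \<phi> (w i) (w j) \<partial>chain_law borel Q \<xi> n) = (\<integral>w. (\<integral>u. \<phi> (w i) u \<partial>kernel_pow borel Q (j - i) (w i)) \<partial>chain_law borel Q \<xi> i)" .
  have "\<bar>\<integral>w. (\<integral>u. \<phi> (w i) u \<partial>kernel_pow borel Q (j - i) (w i)) \<partial>chain_law borel Q \<xi> i\<bar> \<le> 2 * c * (1/4) ^ ((j - i) div \<tau>)"
    by (rule abs_integral_le_const[OF chain_prob(1)[OF xi]])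
       (rule decay[OF pi inv mix phi_meas2[OF f] b zero])
  then show ?thesis using eq by simp
qed

end

theorem lemma1:
  fixes Q :: "'z::polish_space \<Rightarrow> 'z measure"
    and \<pi> :: "'z measure"
    and \<tau> :: nat
    and F :: "real ^ 'd \<Rightarrow> 'z \<Rightarrow> real"
    and gradF :: "real ^ 'd \<Rightarrow> 'z \<Rightarrow> real ^ 'd"
    and f :: "real ^ 'd \<Rightarrow> real"
    and gradf :: "real ^ 'd \<Rightarrow> real ^ 'd"
    and \<sigma> \<delta> :: real
  assumes kernel: "Q \<in> borel \<rightarrow>\<^sub>M prob_algebra borel"
    and pi_prob: "prob_space \<pi>" and pi_sets: "sets \<pi> = sets borel"
    and pi_inv: "bind \<pi> Q = \<pi>"
    and pi_unique: "\<And>\<nu>. prob_space \<nu> \<Longrightarrow> sets \<nu> = sets borel \<Longrightarrow> bind \<nu> Q = \<nu> \<Longrightarrow> \<nu> = \<pi>"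
    and tau_pos: "\<tau> \<ge> 1"
    and mixing: "\<And>k z z'. tv_norm (kernel_pow borel Q k z) (kernel_pow borel Q k z') / 2
                    \<le> (1/4) ^ (k div \<tau>)"
    and F_meas: "\<And>x. F x \<in> borel_measurable borel"
    and F_int: "\<And>x. integrable \<pi> (F x)"
    and F_grad: "\<And>x z. GDERIV (\<lambda>y. F y z) x :> gradF x z"
    and gradF_meas: "\<And>x. gradF x \<in> borel_measurable borel"
    and f_def: "\<And>x. f x = (\<integral>z. F x z \<partial>\<pi>)"
    and f_grad: "\<And>x. GDERIV f x :> gradf x"
    and unbiased: "\<And>x. integrable \<pi> (gradF x) \<and> (\<integral>z. gradF x z \<partial>\<pi>) = gradf x"
    and sigma_nonneg: "\<sigma> \<ge> 0" and delta_nonneg: "\<delta> \<ge> 0"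
    and noise: "\<And>z x. (norm (gradF x z - gradf x))\<^sup>2 \<le> \<sigma>\<^sup>2 + \<delta>\<^sup>2 * (norm (gradf x))\<^sup>2"
  shows "\<forall>n::nat. \<forall>x. n \<ge> 1 \<longrightarrow>
      (\<integral>w. (norm ((1 / real n) *\<^sub>R (\<Sum>i=1..n. gradF x (w i)) - gradf x))\<^sup>2
          \<partial>(chain_law borel Q \<pi> n))
        \<le> 8 * real \<tau> / real n * (\<sigma>\<^sup>2 + \<delta>\<^sup>2 * (norm (gradf x))\<^sup>2)
      \<and> (\<forall>\<xi>. prob_space \<xi> \<and> sets \<xi> = sets borel \<longrightarrow>
           (\<integral>w. (norm ((1 / real n) *\<^sub>R (\<Sum>i=1..n. gradF x (w i)) - gradf x))\<^sup>2
              \<partial>(chain_law borel Q \<xi> n))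
            \<le> 16 * (1 + 1 / (ln 4)\<^sup>2) * real \<tau> / real n * (\<sigma>\<^sup>2 + \<delta>\<^sup>2 * (norm (gradf x))\<^sup>2))"
proof -
  interpret mchain Q by unfold_locales (rule kernel)
  have main: "(\<integral>w. (norm ((1 / real n) *\<^sub>R (\<Sum>i=1..n. gradF x (w i)) - gradf x))\<^sup>2 \<partial>(chain_law borel Q \<xi> n))
        \<le> 8 * real \<tau> / real n * (\<sigma>\<^sup>2 + \<delta>\<^sup>2 * (norm (gradf x))\<^sup>2)"
    if n1: "n \<ge> 1" and xi: "prob_space \<xi>" "sets \<xi> = sets borel" for n x \<xi>
  proof -
    define g where "g = (\<lambda>a. gradF x a - gradf x)"
    define B where "B = \<sigma>\<^sup>2 + \<delta>\<^sup>2 * (norm (gradf x))\<^sup>2"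
    define \<phi> where "\<phi> = (\<lambda>a b. inner (g a) (g b))"
    define C where "C = chain_law borel Q \<xi> n"
    have gm: "g \<in> borel_measurable borel" unfolding g_def using gradF_meas[of x] by measurable
    have B0: "B \<ge> 0" unfolding B_def by simp
    have gB: "norm (g a) \<le> sqrt B" for a
      using noise[where z=a and x=x] unfolding g_def B_def by (intro real_le_rsqrt) simp
    have \<phi>b: "\<bar>\<phi> a b\<bar> \<le> B" for a b
    proof -
      have "\<bar>\<phi> a b\<bar> \<le> norm (g a) * norm (g b)" unfolding \<phi>_def by (rule Cauchy_Schwarz_ineq2)
      also have "\<dots> \<le> sqrt B * sqrt B" using gB B0 by (intro mult_mono) auto
      also have "\<dots> = B" using B0 by simp
      finally show ?thesis .
    qed
    have \<phi>m: "(\<lambda>(a, b). \<phi> a b) \<in> borel_measurable (borel \<Otimes>\<^sub>M borel)"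
    proof -
      have "(\<lambda>p. inner (g (fst p)) (g (snd p))) \<in> borel_measurable ((borel::'z measure) \<Otimes>\<^sub>M (borel::'z measure))"
        by (intro borel_measurable_inner measurable_compose[OF measurable_fst gm] measurable_compose[OF measurable_snd gm])
      then show ?thesis unfolding \<phi>_def by (simp add: split_beta')
    qed
    interpret P: prob_space \<pi> by (rule pi_prob)
    have gi: "integrable \<pi> g" unfolding g_def using unbiased[of x]
      by (intro Bochner_Integration.integrable_diff) (auto simp: P.emeasure_space_1)
    have gint: "(\<integral>a. g a \<partial>\<pi>) = 0" unfolding g_def using unbiased[of x]
      by (subst Bochner_Integration.integral_diff) (auto simp: P.prob_space P.emeasure_space_1)
    have \<phi>0: "(\<integral>u. \<phi> a u \<partial>\<pi>) = 0" for a unfolding \<phi>_def using gi gint by simp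
    have pb: "\<bar>\<integral>w. \<phi> (w i) (w j) \<partial>C\<bar> \<le> 2 * B * (1/4) ^ (dd i j div \<tau>)"
      if ij: "i \<in> {1..n}" "j \<in> {1..n}" for i j
    proof (cases "i \<le> j")
      case True
      then show ?thesis unfolding C_def dd_def
        using pair_bound[OF xi pi_prob pi_sets pi_inv mixing \<phi>m \<phi>b \<phi>0, of i j n] ij by simp
    next
      case False
      have sym: "(\<lambda>w. \<phi> (w i) (w j)) = (\<lambda>w. \<phi> (w j) (w i))" unfolding \<phi>_def by (simp add: inner_commute)
      show ?thesis unfolding C_def dd_def sym
        using pair_bound[OF xi pi_prob pi_sets pi_inv mixing \<phi>m \<phi>b \<phi>0, of j i n] ij False by simp
    qed
    have Cp: "prob_space C" unfolding C_def by (rule chain_prob(1)[OF xi])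
    interpret CP: prob_space C by (rule Cp)
    have int: "integrable C (\<lambda>w. \<phi> (w i) (w j))" if ij: "i \<in> {1..n}" "j \<in> {1..n}" for i j
    proof -
      have "(\<lambda>w. \<phi> (w i) (w j)) \<in> borel_measurable (PiM {..n} (\<lambda>_. borel))"
        using ij by (intro phi_meas[OF \<phi>m]) auto
      then have "(\<lambda>w. \<phi> (w i) (w j)) \<in> borel_measurable C"
        unfolding C_def using chain_prob(2)[OF xi] by (simp cong: measurable_cong_sets)
      then show ?thesis using \<phi>b by (intro CP.integrable_const_bound[where B=B]) (auto intro!: AE_I2)
    qed
    have pw: "(norm ((1 / real n) *\<^sub>R (\<Sum>i=1..n. gradF x (w i)) - gradf x))\<^sup>2
        = (1 / real n)\<^sup>2 * (\<Sum>i\<in>{1..n}. \<Sum>j\<in>{1..n}. \<phi> (w i) (w j))" for w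
    proof -
      have s: "(\<Sum>i=1..n. g (w i)) = (\<Sum>i=1..n. gradF x (w i)) - real n *\<^sub>R gradf x"
        unfolding g_def by (simp add: sum_subtractf scaleR_conv_of_real)
      have "(1 / real n) *\<^sub>R (\<Sum>i=1..n. gradF x (w i)) - gradf x = (1 / real n) *\<^sub>R (\<Sum>i=1..n. g (w i))"
        unfolding s using n1 by (simp add: scaleR_right_diff_distrib)
      then have "(norm ((1 / real n) *\<^sub>R (\<Sum>i=1..n. gradF x (w i)) - gradf x))\<^sup>2
          = (1 / real n)\<^sup>2 * (norm (\<Sum>i=1..n. g (w i)))\<^sup>2"
        by (simp add: power_divide)
      also have "(norm (\<Sum>i=1..n. g (w i)))\<^sup>2 = (\<Sum>i\<in>{1..n}. \<Sum>j\<in>{1..n}. \<phi> (w i) (w j))"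
        unfolding power2_norm_eq_inner \<phi>_def by (simp add: inner_sum_left inner_sum_right) (rule sum.swap)
      finally show ?thesis .
    qed
    have "(\<integral>w. (norm ((1 / real n) *\<^sub>R (\<Sum>i=1..n. gradF x (w i)) - gradf x))\<^sup>2 \<partial>C)
        = (1 / real n)\<^sup>2 * (\<Sum>i\<in>{1..n}. \<Sum>j\<in>{1..n}. (\<integral>w. \<phi> (w i) (w j) \<partial>C))"
    proof -
      have "(\<integral>w. (\<Sum>i\<in>{1..n}. \<Sum>j\<in>{1..n}. \<phi> (w i) (w j)) \<partial>C) = (\<Sum>i\<in>{1..n}. \<integral>w. (\<Sum>j\<in>{1..n}. \<phi> (w i) (w j)) \<partial>C)"
        by (rule Bochner_Integration.integral_sum) (auto intro!: Bochner_Integration.integrable_sum int)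
      also have "\<dots> = (\<Sum>i\<in>{1..n}. \<Sum>j\<in>{1..n}. \<integral>w. \<phi> (w i) (w j) \<partial>C)"
        by (intro sum.cong refl Bochner_Integration.integral_sum) (auto intro!: int)
      finally have I: "(\<integral>w. (\<Sum>i\<in>{1..n}. \<Sum>j\<in>{1..n}. \<phi> (w i) (w j)) \<partial>C) = (\<Sum>i\<in>{1..n}. \<Sum>j\<in>{1..n}. \<integral>w. \<phi> (w i) (w j) \<partial>C)" .
      show ?thesis by (simp only: pw integral_mult_right_zero I)
    qed
    also have "\<dots> \<le> (1 / real n)\<^sup>2 * (\<Sum>i\<in>{1..n}. \<Sum>j\<in>{1..n}. 2 * B * (1/4) ^ (dd i j div \<tau>))"
    proof (intro mult_left_mono sum_mono)
      fix i j assume "i \<in> {1..n}" "j \<in> {1..n}"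
      then show "(\<integral>w. \<phi> (w i) (w j) \<partial>C) \<le> 2 * B * (1/4) ^ (dd i j div \<tau>)"
        using pb by fastforce
    qed simp
    also have "\<dots> \<le> (1 / real n)\<^sup>2 * (\<Sum>i\<in>{1..n}. 2 * B * (4 * real \<tau>))"
    proof (intro mult_left_mono sum_mono)
      fix i assume i: "i \<in> {1..n}"
      have "(\<Sum>j\<in>{1..n}. 2 * B * (1/4::real) ^ (dd i j div \<tau>)) = 2 * B * (\<Sum>j\<in>{1..n}. (1/4::real) ^ (dd i j div \<tau>))"
        by (simp add: sum_distrib_left)
      also have "\<dots> \<le> 2 * B * (4 * real \<tau>)"
        using row_sum[OF tau_pos i] B0 by (intro mult_left_mono) auto
      finally show "(\<Sum>j\<in>{1..n}. 2 * B * (1/4::real) ^ (dd i j div \<tau>)) \<le> 2 * B * (4 * real \<tau>)" .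
    qed simp
    also have "\<dots> = 8 * real \<tau> / real n * B"
      using n1 by (simp add: power2_eq_square field_simps)
    finally show ?thesis unfolding C_def B_def .
  qed
  have C8: "(8::real) \<le> 16 * (1 + 1 / (ln 4)\<^sup>2)" by simp
  show ?thesis
  proof (intro allI impI conjI)
    fix n :: nat and x assume n: "n \<ge> 1"
    show "(\<integral>w. (norm ((1 / real n) *\<^sub>R (\<Sum>i=1..n. gradF x (w i)) - gradf x))\<^sup>2
          \<partial>(chain_law borel Q \<pi> n))
        \<le> 8 * real \<tau> / real n * (\<sigma>\<^sup>2 + \<delta>\<^sup>2 * (norm (gradf x))\<^sup>2)"
      by (rule main[OF n pi_prob pi_sets])
    fix \<xi> :: "'z measure" assume xi: "prob_space \<xi> \<and> sets \<xi> = sets borel"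
    have "(\<integral>w. (norm ((1 / real n) *\<^sub>R (\<Sum>i=1..n. gradF x (w i)) - gradf x))\<^sup>2
              \<partial>(chain_law borel Q \<xi> n))
        \<le> 8 * real \<tau> / real n * (\<sigma>\<^sup>2 + \<delta>\<^sup>2 * (norm (gradf x))\<^sup>2)"
      using xi by (intro main[OF n]) auto
    also have "\<dots> \<le> 16 * (1 + 1 / (ln 4)\<^sup>2) * real \<tau> / real n * (\<sigma>\<^sup>2 + \<delta>\<^sup>2 * (norm (gradf x))\<^sup>2)"
    proof -
      have "0 \<le> real \<tau> / real n * (\<sigma>\<^sup>2 + \<delta>\<^sup>2 * (norm (gradf x))\<^sup>2)" by simp
      from mult_right_mono[OF C8 this] show ?thesis by simp
    qed
    finally show "(\<integral>w. (norm ((1 / real n) *\<^sub>R (\<Sum>i=1..n. gradF x (w i)) - gradf x))\<^sup>2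
              \<partial>(chain_law borel Q \<xi> n))
            \<le> 16 * (1 + 1 / (ln 4)\<^sup>2) * real \<tau> / real n * (\<sigma>\<^sup>2 + \<delta>\<^sup>2 * (norm (gradf x))\<^sup>2)" .
  qed
qed

end
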